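(* Consider the mining game with $N\ge2$ miners, costs $0<c_1\le\dots\le c_N$, reward $R>0$ and capacity $\gamma\ge0$, at parameter values where the number $n$ of active miners does not change under small perturbations of the parameters. For an active miner $i$, $$\frac{\partial h_i^*}{\partial\gamma}=\Delta^{(\gamma)}_{i,1}+\Delta^{(\gamma)}_{i,2},\quad \Delta^{(\gamma)}_{i,1}<0,\quad \Delta^{(\gamma)}_{i,2}>0\iff \frac{h_i^*}{H^*}<\frac12,$$ $$\frac{\partial h_i^*}{\partial R}=\Delta^{(R)}_{i,1}+\Delta^{(R)}_{i,2}>0,\quad \Delta^{(R)}_{i,1}>0,\quad \Delta^{(R)}_{i,2}<0\iff \frac{h_i^*}{H^*}<\frac12.$$ Furthermore, the derivatives $\frac{\partial}{\partial\gamma}\frac{h_i^*}{H^*}$ and $\frac{\partial}{\partial R}\frac{h_i^*}{H^*}$ are increasing in $i$ for $1\le i\le n$.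
   Context: Mining game: $N\ge2$ miners with costs-per-hash $0<c_1\le\dots\le c_N$; each miner $i$ chooses $h_i\ge0$, $H=\sum_j h_j$, payoff $\frac{h_i}{H}R-c_ih_i-\frac{\gamma}{2}h_i^2$ if $H>0$ and $0$ if $H=0$, with $R>0$, $\gamma\ge0$. The pure Nash equilibrium $h^*$ is unique; its active miners ($h_i^*>0$) are $1,\dots,n$ for some $2\le n\le N$, and with $c^{(n)}=\sum_{i=1}^nc_i$ one has $H^*=g(c_1,\dots,c_n,\gamma,R):=\frac{\sqrt{(c^{(n)})^2+4(n-1)R\gamma}-c^{(n)}}{2\gamma}$ for $\gamma>0$ (and $(n-1)R/c^{(n)}$ for $\gamma=0$), and $h_i^*=f_i(c_i,\gamma,R,H^* )$ for $i\le n$ where $f_i(c,\gamma,R,x):=x\frac{R-cx}{R+\gamma x^2}$. Derivatives are of these closed forms with $n$ held fixed. Definitions: $\Delta^{(\gamma)}_{i,1}:=\frac{\partial f_i}{\partial\gamma}$ and $\Delta^{(R)}_{i,1}:=\frac{\partial f_i}{\partial R}$ (with the fourth argument $x=H^*$ held fixed), $\Delta^{(\gamma)}_{i,2}:=\frac{\partial f_i}{\partial x}\big|_{x=H^*}\frac{\partial g}{\partial\gamma}$ and $\Delta^{(R)}_{i,2}:=\frac{\partial f_i}{\partial x}\big|_{x=H^*}\frac{\partial g}{\partial R}$. A sequence is increasing if $x_i\le x_{i+1}$ for all $i$. *)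

theory Defs
  imports "HOL-Analysis.Analysis"
begin

text \<open>Miners are indexed 1..N; costs c :: nat => real; a hash profile h :: nat => real
  (only the values on {1..N} matter).\<close>

definition total_hash :: "nat \<Rightarrow> (nat \<Rightarrow> real) \<Rightarrow> real" where
  "total_hash N h = (\<Sum>j=1..N. h j)"

definition payoff :: "nat \<Rightarrow> (nat \<Rightarrow> real) \<Rightarrow> real \<Rightarrow> real \<Rightarrow> nat \<Rightarrow> (nat \<Rightarrow> real) \<Rightarrow> real" where
  "payoff N c gamma R i h =
     (if total_hash N h > 0
      then h i / total_hash N h * R - c i * h i - gamma / 2 * (h i)\<^sup>2
      else 0)"

definition is_NE :: "nat \<Rightarrow> (nat \<Rightarrow> real) \<Rightarrow> real \<Rightarrow> real \<Rightarrow> (nat \<Rightarrow> real) \<Rightarrow> bool" where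
  "is_NE N c gamma R h \<longleftrightarrow>
     (\<forall>i\<in>{1..N}. 0 \<le> h i \<and>
        (\<forall>x\<ge>0. payoff N c gamma R i (h(i := x)) \<le> payoff N c gamma R i h))"

definition csum :: "nat \<Rightarrow> (nat \<Rightarrow> real) \<Rightarrow> real" where
  "csum n c = (\<Sum>i=1..n. c i)"

text \<open>Closed form g(c_1,...,c_n,gamma,R) of the total hash rate H*.\<close>
definition g_fun :: "nat \<Rightarrow> (nat \<Rightarrow> real) \<Rightarrow> real \<Rightarrow> real \<Rightarrow> real" where
  "g_fun n c gamma R =
     (if gamma = 0 then (real n - 1) * R / csum n c
      else (sqrt ((csum n c)\<^sup>2 + 4 * (real n - 1) * R * gamma) - csum n c) / (2 * gamma))"

definition f_fun :: "real \<Rightarrow> real \<Rightarrow> real \<Rightarrow> real \<Rightarrow> real" where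
  "f_fun cc gamma R x = x * (R - cc * x) / (R + gamma * x\<^sup>2)"

definition hstar :: "nat \<Rightarrow> (nat \<Rightarrow> real) \<Rightarrow> real \<Rightarrow> real \<Rightarrow> nat \<Rightarrow> real" where
  "hstar n c gamma R i = f_fun (c i) gamma R (g_fun n c gamma R)"

definition profile :: "nat \<Rightarrow> (nat \<Rightarrow> real) \<Rightarrow> real \<Rightarrow> real \<Rightarrow> nat \<Rightarrow> real" where
  "profile n c gamma R = (\<lambda>i. if 1 \<le> i \<and> i \<le> n then hstar n c gamma R i else 0)"

end

theory Submission
  imports Defs
begin
lemma Hfacts:
  fixes C m R gam :: real
  assumes C: "C > 0" and m: "m > 0" and R: "R > 0" and gam: "gam \<ge> 0"
  defines "H \<equiv> (if gam = 0 then m * R / C else (sqrt (C\<^sup>2 + 4 * m * R * gam) - C) / (2 * gam))"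
  shows "H > 0" "gam * H\<^sup>2 + C * H = m * R" "sqrt (C\<^sup>2 + 4 * m * R * gam) = 2 * gam * H + C"
proof -
  have all: "H > 0 \<and> gam * H\<^sup>2 + C * H = m * R \<and> sqrt (C\<^sup>2 + 4 * m * R * gam) = 2 * gam * H + C"
  proof (cases "gam = 0")
    case True
    then show ?thesis using C m R by (simp add: H_def field_simps power2_eq_square)
  next
    case False
    then have gp: "gam > 0" using gam by simp
    let ?S = "sqrt (C\<^sup>2 + 4 * m * R * gam)"
    have S2: "?S\<^sup>2 = C\<^sup>2 + 4 * m * R * gam" using C m R gp by (intro real_sqrt_pow2) (auto intro!: add_nonneg_nonneg)
    have SC: "?S > C"
      using C m R gp by (intro real_less_rsqrt) (auto simp: power2_eq_square)
    have Hd: "H = (?S - C) / (2 * gam)" using False by (simp add: H_def)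
    have "H > 0" using Hd SC gp by simp
    moreover have "2 * gam * H + C = ?S"
    proof -
      have "2 * gam * H = ?S - C" unfolding Hd using gp by simp
      then show ?thesis by linarith
    qed
    moreover have "gam * H\<^sup>2 + C * H = m * R"
    proof -
      have gen: "\<And>S. H = (S - C) / (2 * gam) \<Longrightarrow> gam * H\<^sup>2 + C * H = (S\<^sup>2 - C\<^sup>2) / (4 * gam)"
        using gp by (simp add: field_simps power2_eq_square)
      have "gam * H\<^sup>2 + C * H = (?S\<^sup>2 - C\<^sup>2) / (4 * gam)" by (rule gen[OF Hd])
      also have "\<dots> = m * R" using S2 gp by simp
      finally show ?thesis .
    qed
    ultimately show ?thesis by simp
  qed
  then show "H > 0" "gam * H\<^sup>2 + C * H = m * R" "sqrt (C\<^sup>2 + 4 * m * R * gam) = 2 * gam * H + C" by auto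
qed

definition Gf :: "real \<Rightarrow> real \<Rightarrow> real \<Rightarrow> real \<Rightarrow> real" where
  "Gf C m r t = (if t = 0 then m * r / C else (sqrt (C\<^sup>2 + 4 * m * r * t) - C) / (2 * t))"

lemma Gf_alt:
  fixes C m r t :: real
  assumes C: "C > 0" and pos: "C\<^sup>2 + 4 * m * r * t > 0"
  shows "Gf C m r t = 2 * m * r / (sqrt (C\<^sup>2 + 4 * m * r * t) + C)"
proof (cases "t = 0")
  case True then show ?thesis using C by (simp add: Gf_def)
next
  case False
  define S where "S = sqrt (C\<^sup>2 + 4 * m * r * t)"
  have S2: "S\<^sup>2 = C\<^sup>2 + 4 * m * r * t" using real_sqrt_pow2[of "C\<^sup>2 + 4 * m * r * t"] pos unfolding S_def by linarith
  have Sp: "S \<ge> 0" unfolding S_def using pos by simp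
  have "Gf C m r t = (S - C) / (2 * t)" using False by (simp add: Gf_def S_def)
  also have "\<dots> = 2 * m * r / (S + C)"
  proof -
    have "(S - C) * (S + C) = 4 * m * r * t" using S2 by (simp add: algebra_simps power2_eq_square)
    then show ?thesis using False Sp C by (simp add: field_simps)
  qed
  finally show ?thesis by (simp add: S_def)
qed

lemma Gf_deriv_gam:
  fixes C m R gam :: real
  assumes C: "C > 0" and m: "m > 0" and R: "R > 0" and gam: "gam \<ge> 0"
  shows "((\<lambda>t. Gf C m R t) has_real_derivative (-((Gf C m R gam)\<^sup>2) / (2 * gam * Gf C m R gam + C))) (at gam)"
proof -
  define a where "a = m * R"
  have a: "a > 0" using m R by (simp add: a_def)
  define S where "S = sqrt (C\<^sup>2 + 4 * a * gam)"
  have posg: "C\<^sup>2 + 4 * a * gam > 0" using C a gam by (simp add: add_pos_nonneg)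
  have Spos: "S > 0" unfolding S_def using posg by simp
  define H where "H = Gf C m R gam"
  have HF: "H > 0" "gam * H\<^sup>2 + C * H = m * R" "sqrt (C\<^sup>2 + 4 * m * R * gam) = 2 * gam * H + C"
    using Hfacts[OF C m R gam] unfolding H_def Gf_def by auto
  have SH: "S = 2 * gam * H + C" using HF(3) by (simp add: S_def a_def mult.assoc)
  have Ha: "H = 2 * a / (S + C)" unfolding H_def S_def a_def
    using Gf_alt[OF C] posg by (simp add: a_def mult.assoc)
  have D: "((\<lambda>t. 2 * a / (sqrt (C\<^sup>2 + 4 * a * t) + C)) has_real_derivative
        (- (2 * a) * (4 * a / (2 * S)) / (S + C)\<^sup>2)) (at gam)"
    using posg Spos C unfolding S_def
    apply (auto intro!: derivative_eq_intros)
     apply (smt (verit) real_sqrt_ge_zero)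
    apply (simp add: field_simps power2_eq_square)
    done
  have eqv: "- (2 * a) * (4 * a / (2 * S)) / (S + C)\<^sup>2 = -(H\<^sup>2) / (2 * gam * H + C)"
  proof -
    have "-(H\<^sup>2) / (2 * gam * H + C) = -((2 * a / (S + C))\<^sup>2) / S"
      unfolding SH[symmetric] by (simp only: Ha)
    also have "\<dots> = - (2 * a) * (4 * a / (2 * S)) / (S + C)\<^sup>2" using Spos C
      by (simp add: field_simps power2_eq_square)
    finally show ?thesis by simp
  qed
  have D2: "((\<lambda>t. 2 * a / (sqrt (C\<^sup>2 + 4 * a * t) + C)) has_real_derivative
        (-(H\<^sup>2) / (2 * gam * H + C))) (at gam)" using D eqv by simp
  show ?thesis unfolding H_def[symmetric]
  proof (rule has_field_derivative_transform_within[OF D2, of "C\<^sup>2 / (4 * a)"])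
    show "0 < C\<^sup>2 / (4 * a)" using C a by simp
    show "gam \<in> UNIV" by simp
    fix x :: real assume "dist x gam < C\<^sup>2 / (4 * a)"
    then have "gam - x < C\<^sup>2 / (4 * a)" by (simp add: dist_real_def abs_less_iff)
    then have "4 * a * (gam - x) < C\<^sup>2" using a by (simp add: field_simps)
    moreover have "4 * a * x = 4 * a * gam - 4 * a * (gam - x)" by (simp add: algebra_simps)
    moreover have "0 \<le> a * gam" using a gam by simp
    ultimately have "C\<^sup>2 + 4 * a * x > 0" by linarith
    then show "2 * a / (sqrt (C\<^sup>2 + 4 * a * x) + C) = Gf C m R x"
      using Gf_alt[OF C, of m R x] by (simp add: a_def mult.assoc)
  qed
qed

lemma Gf_deriv_R:
  fixes C m R gam :: real
  assumes C: "C > 0" and m: "m > 0" and R: "R > 0" and gam: "gam \<ge> 0"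
  shows "((\<lambda>r. Gf C m r gam) has_real_derivative (m / (2 * gam * Gf C m R gam + C))) (at R)"
proof -
  define H where "H = Gf C m R gam"
  have HF: "H > 0" "gam * H\<^sup>2 + C * H = m * R" "sqrt (C\<^sup>2 + 4 * m * R * gam) = 2 * gam * H + C"
    using Hfacts[OF C m R gam] unfolding H_def Gf_def by auto
  show ?thesis
  proof (cases "gam = 0")
    case True
    then show ?thesis unfolding Gf_def using C
      by (auto intro!: derivative_eq_intros)
  next
    case False
    then have gp: "gam > 0" using gam by simp
    have posg: "C\<^sup>2 + 4 * m * R * gam > 0" using C m R gp by (simp add: add_pos_nonneg)
    have D: "((\<lambda>r. (sqrt (C\<^sup>2 + 4 * m * r * gam) - C) / (2 * gam)) has_real_derivative
       (m / sqrt (C\<^sup>2 + 4 * m * R * gam))) (at R)"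
      using posg gp by (auto intro!: derivative_eq_intros simp: field_simps)
    then show ?thesis using False unfolding HF(3) unfolding H_def Gf_def by simp
  qed
qed

definition fg :: "real \<Rightarrow> real \<Rightarrow> real \<Rightarrow> real \<Rightarrow> real" where
  "fg cc gam R x = -(x^3 * (R - cc * x)) / (R + gam * x\<^sup>2)\<^sup>2"
definition fx :: "real \<Rightarrow> real \<Rightarrow> real \<Rightarrow> real \<Rightarrow> real" where
  "fx cc gam R x = R * (R - gam * x\<^sup>2 - 2 * cc * x) / (R + gam * x\<^sup>2)\<^sup>2"
definition fR :: "real \<Rightarrow> real \<Rightarrow> real \<Rightarrow> real \<Rightarrow> real" where
  "fR cc gam R x = x\<^sup>2 * (gam * x + cc) / (R + gam * x\<^sup>2)\<^sup>2"

lemma f_d_gam: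
  assumes "R + gam * x\<^sup>2 \<noteq> 0"
  shows "((\<lambda>t. f_fun cc t R x) has_real_derivative fg cc gam R x) (at gam)"
  unfolding f_fun_def fg_def using assms
  by (auto intro!: derivative_eq_intros simp: field_simps power2_eq_square power3_eq_cube)

lemma f_d_x:
  assumes "R + gam * x\<^sup>2 \<noteq> 0"
  shows "((\<lambda>y. f_fun cc gam R y) has_real_derivative fx cc gam R x) (at x)"
  unfolding f_fun_def fx_def using assms
  by (auto intro!: derivative_eq_intros simp: field_simps power2_eq_square)

lemma f_d_R:
  assumes "R + gam * x\<^sup>2 \<noteq> 0"
  shows "((\<lambda>r. f_fun cc gam r x) has_real_derivative fR cc gam R x) (at R)"
  unfolding f_fun_def fR_def using assms
  by (auto intro!: derivative_eq_intros simp: field_simps power2_eq_square)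

lemma chain_gam:
  assumes G: "(G has_real_derivative G') (at gam)" and nz: "R + gam * (G gam)\<^sup>2 \<noteq> 0"
  shows "((\<lambda>t. f_fun cc t R (G t)) has_real_derivative
           (fg cc gam R (G gam) + fx cc gam R (G gam) * G')) (at gam)"
proof -
  define y where "y = G gam"
  have N: "((\<lambda>t. G t * (R - cc * G t)) has_real_derivative (G' * (R - cc * y) + y * (- (cc * G')))) (at gam)"
    unfolding y_def by (auto intro!: derivative_eq_intros G)
  have Dd: "((\<lambda>t. R + t * (G t)\<^sup>2) has_real_derivative (y\<^sup>2 + gam * (2 * y * G'))) (at gam)"
    unfolding y_def by (auto intro!: derivative_eq_intros G simp: power2_eq_square)
  have nz': "R + gam * y\<^sup>2 \<noteq> 0" using nz by (simp add: y_def)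
  have Q: "((\<lambda>t. G t * (R - cc * G t) / (R + t * (G t)\<^sup>2)) has_real_derivative
     (((G' * (R - cc * y) + y * (- (cc * G'))) * (R + gam * y\<^sup>2) - y * (R - cc * y) * (y\<^sup>2 + gam * (2 * y * G')))
       / ((R + gam * y\<^sup>2) * (R + gam * y\<^sup>2)))) (at gam)"
    using DERIV_divide[OF N Dd] nz' by (simp add: y_def)
  define D where "D = R + gam * y\<^sup>2"
  have num: "(G' * (R - cc * y) + y * (- (cc * G'))) * (R + gam * y\<^sup>2) - y * (R - cc * y) * (y\<^sup>2 + gam * (2 * y * G'))
     = -(y^3 * (R - cc * y)) + R * (R - gam * y\<^sup>2 - 2 * cc * y) * G'"
    by (simp add: algebra_simps power2_eq_square power3_eq_cube)
  have "fg cc gam R y + fx cc gam R y * G' = (-(y^3 * (R - cc * y)) + R * (R - gam * y\<^sup>2 - 2 * cc * y) * G') / (D * D)"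
    unfolding fg_def fx_def D_def[symmetric] by (simp add: power2_eq_square add_divide_distrib diff_divide_distrib)
  with Q num show ?thesis unfolding f_fun_def D_def y_def by simp
qed

lemma chain_R:
  assumes G: "(G has_real_derivative G') (at R)" and nz: "R + gam * (G R)\<^sup>2 \<noteq> 0"
  shows "((\<lambda>r. f_fun cc gam r (G r)) has_real_derivative
           (fR cc gam R (G R) + fx cc gam R (G R) * G')) (at R)"
proof -
  define y where "y = G R"
  have N: "((\<lambda>r. G r * (r - cc * G r)) has_real_derivative (G' * (R - cc * y) + y * (1 - cc * G'))) (at R)"
    unfolding y_def by (auto intro!: derivative_eq_intros G)
  have Dd: "((\<lambda>r. r + gam * (G r)\<^sup>2) has_real_derivative (1 + gam * (2 * y * G'))) (at R)"
    unfolding y_def by (auto intro!: derivative_eq_intros G simp: power2_eq_square)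
  have nz': "R + gam * y\<^sup>2 \<noteq> 0" using nz by (simp add: y_def)
  have Q: "((\<lambda>r. G r * (r - cc * G r) / (r + gam * (G r)\<^sup>2)) has_real_derivative
     (((G' * (R - cc * y) + y * (1 - cc * G')) * (R + gam * y\<^sup>2) - y * (R - cc * y) * (1 + gam * (2 * y * G')))
       / ((R + gam * y\<^sup>2) * (R + gam * y\<^sup>2)))) (at R)"
    using DERIV_divide[OF N Dd] nz' by (simp add: y_def)
  define D where "D = R + gam * y\<^sup>2"
  have num: "(G' * (R - cc * y) + y * (1 - cc * G')) * (R + gam * y\<^sup>2) - y * (R - cc * y) * (1 + gam * (2 * y * G'))
     = y\<^sup>2 * (gam * y + cc) + R * (R - gam * y\<^sup>2 - 2 * cc * y) * G'"
    by (simp add: algebra_simps power2_eq_square power3_eq_cube)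
  have "fR cc gam R y + fx cc gam R y * G' = (y\<^sup>2 * (gam * y + cc) + R * (R - gam * y\<^sup>2 - 2 * cc * y) * G') / (D * D)"
    unfolding fR_def fx_def D_def[symmetric] by (simp add: power2_eq_square add_divide_distrib diff_divide_distrib)
  with Q num show ?thesis unfolding f_fun_def D_def y_def by simp
qed

lemma ratio_gam:
  assumes G: "(G has_real_derivative G') (at gam)" and nz: "R + gam * (G gam)\<^sup>2 \<noteq> 0"
    and y0: "G gam \<noteq> 0"
  shows "((\<lambda>t. f_fun cc t R (G t) / G t) has_real_derivative
     ((-(R * ((G gam)\<^sup>2 + 2 * gam * G gam * G')) + cc * (- G' * (R + gam * (G gam)\<^sup>2) + (G gam)^3 + 2 * gam * (G gam)\<^sup>2 * G'))
        / (R + gam * (G gam)\<^sup>2)\<^sup>2)) (at gam)"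
proof -
  define y where "y = G gam"
  define D where "D = R + gam * y\<^sup>2"
  have Dnz: "D \<noteq> 0" using nz by (simp add: D_def y_def)
  have ynz: "y \<noteq> 0" using y0 by (simp add: y_def)
  have Q: "((\<lambda>t. f_fun cc t R (G t) / G t) has_real_derivative
     (((fg cc gam R y + fx cc gam R y * G') * y - f_fun cc gam R y * G') / (y * y))) (at gam)"
    using DERIV_divide[OF chain_gam[OF G nz] G y0] by (simp add: y_def)
  have e: "((fg cc gam R y + fx cc gam R y * G') * y - f_fun cc gam R y * G') / (y * y) =
    (-(R * (y\<^sup>2 + 2 * gam * y * G')) + cc * (- G' * D + y^3 + 2 * gam * y\<^sup>2 * G')) / D\<^sup>2"
    unfolding fg_def fx_def f_fun_def D_def[symmetric] using Dnz ynz
    apply (simp add: field_simps)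
    apply (unfold D_def)
    apply algebra
    done
  show ?thesis using Q e unfolding D_def y_def by simp
qed

lemma ratio_R:
  assumes G: "(G has_real_derivative G') (at R)" and nz: "R + gam * (G R)\<^sup>2 \<noteq> 0"
    and y0: "G R \<noteq> 0"
  shows "((\<lambda>r. f_fun cc gam r (G r) / G r) has_real_derivative
     (((R + gam * (G R)\<^sup>2) - R * (1 + 2 * gam * G R * G') + cc * (- G' * (R + gam * (G R)\<^sup>2) + G R + 2 * gam * (G R)\<^sup>2 * G'))
        / (R + gam * (G R)\<^sup>2)\<^sup>2)) (at R)"
proof -
  define y where "y = G R"
  define D where "D = R + gam * y\<^sup>2"
  have Dnz: "D \<noteq> 0" using nz by (simp add: D_def y_def)
  have ynz: "y \<noteq> 0" using y0 by (simp add: y_def)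
  have Q: "((\<lambda>r. f_fun cc gam r (G r) / G r) has_real_derivative
     (((fR cc gam R y + fx cc gam R y * G') * y - f_fun cc gam R y * G') / (y * y))) (at R)"
    using DERIV_divide[OF chain_R[OF G nz] G y0] by (simp add: y_def)
  have e: "((fR cc gam R y + fx cc gam R y * G') * y - f_fun cc gam R y * G') / (y * y) =
    ((D - R * (1 + 2 * gam * y * G')) + cc * (- G' * D + y + 2 * gam * y\<^sup>2 * G')) / D\<^sup>2"
    unfolding fR_def fx_def f_fun_def D_def[symmetric] using Dnz ynz
    apply (simp add: field_simps)
    apply (unfold D_def)
    apply algebra
    done
  show ?thesis using Q e unfolding D_def y_def by simp
qed


theorem proposition4p6:
  fixes N n :: nat and c :: "nat \<Rightarrow> real" and gamma R :: real and i :: nat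
  assumes N2: "2 \<le> N"
    and cpos: "0 < c 1"
    and cmono: "\<forall>k. 1 \<le> k \<and> k < N \<longrightarrow> c k \<le> c (Suc k)"
    and Rpos: "0 < R"
    and gnn: "0 \<le> gamma"
    and n_range: "2 \<le> n" "n \<le> N"
    and eq_here: "is_NE N c gamma R (profile n c gamma R)"
    and active_here: "\<forall>k\<in>{1..n}. 0 < hstar n c gamma R k"
    and stable: "\<exists>e>0. \<forall>gamma' R'. 0 \<le> gamma' \<longrightarrow> 0 < R' \<longrightarrow>
                   \<bar>gamma' - gamma\<bar> < e \<longrightarrow> \<bar>R' - R\<bar> < e \<longrightarrow>
                   is_NE N c gamma' R' (profile n c gamma' R') \<and>
                   (\<forall>k\<in>{1..n}. 0 < hstar n c gamma' R' k)"
    and i_active: "1 \<le> i" "i \<le> n"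
  shows
    "let H = g_fun n c gamma R;
         h = hstar n c gamma R i;
         Dg1 = deriv (\<lambda>t. f_fun (c i) t R H) gamma;
         Dg2 = deriv (\<lambda>x. f_fun (c i) gamma R x) H * deriv (\<lambda>t. g_fun n c t R) gamma;
         DR1 = deriv (\<lambda>r. f_fun (c i) gamma r H) R;
         DR2 = deriv (\<lambda>x. f_fun (c i) gamma R x) H * deriv (\<lambda>r. g_fun n c gamma r) R
     in ((\<lambda>t. hstar n c t R i) has_real_derivative (Dg1 + Dg2)) (at gamma)
        \<and> Dg1 < 0
        \<and> (Dg2 > 0 \<longleftrightarrow> h / H < 1/2)
        \<and> ((\<lambda>r. hstar n c gamma r i) has_real_derivative (DR1 + DR2)) (at R)
        \<and> DR1 + DR2 > 0
        \<and> DR1 > 0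
        \<and> (DR2 < 0 \<longleftrightarrow> h / H < 1/2)
        \<and> (\<forall>k. 1 \<le> k \<and> k < n \<longrightarrow>
              deriv (\<lambda>t. hstar n c t R k / g_fun n c t R) gamma
                \<le> deriv (\<lambda>t. hstar n c t R (Suc k) / g_fun n c t R) gamma)
        \<and> (\<forall>k. 1 \<le> k \<and> k < n \<longrightarrow>
              deriv (\<lambda>r. hstar n c gamma r k / g_fun n c gamma r) R
                \<le> deriv (\<lambda>r. hstar n c gamma r (Suc k) / g_fun n c gamma r) R)"
proof -
  define C where "C = csum n c"
  define m where "m = real n - 1"
  have m: "m > 0" using n_range by (simp add: m_def)
  have cpos_all: "\<And>k. 1 \<le> k \<Longrightarrow> k \<le> N \<Longrightarrow> c 1 \<le> c k"
  proof -
    fix k :: nat assume "1 \<le> k" "k \<le> N"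
    then show "c 1 \<le> c k"
    proof (induction k)
      case 0 then show ?case by simp
    next
      case (Suc k)
      show ?case
      proof (cases "k = 0")
        case True then show ?thesis by simp
      next
        case False
        then have "c 1 \<le> c k" using Suc by simp
        moreover have "c k \<le> c (Suc k)" using cmono Suc.prems False by simp
        ultimately show ?thesis by simp
      qed
    qed
  qed
  have ck: "\<And>k. 1 \<le> k \<Longrightarrow> k \<le> n \<Longrightarrow> c k > 0"
    using cpos_all cpos n_range by (meson le_trans less_le_trans)
  have C: "C > 0" unfolding C_def csum_def
    using n_range ck by (intro sum_pos) auto
  have gfun: "\<And>t r. g_fun n c t r = Gf C m r t"
    unfolding g_fun_def Gf_def C_def m_def by simp
  define H where "H = Gf C m R gamma"
  have HF: "H > 0" "gamma * H\<^sup>2 + C * H = m * R" "sqrt (C\<^sup>2 + 4 * m * R * gamma) = 2 * gamma * H + C"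
    using Hfacts[OF C m Rpos gnn] unfolding H_def Gf_def by auto
  define D where "D = R + gamma * H\<^sup>2"
  have Dp: "D > 0" unfolding D_def using Rpos gnn by (simp add: add_pos_nonneg)
  define S where "S = 2 * gamma * H + C"
  have Sp: "S > 0" unfolding S_def using gnn HF(1) C by (simp add: add_nonneg_pos)
  define Gg where "Gg = -(H\<^sup>2) / S"
  define GR where "GR = m / S"
  have dGg: "((\<lambda>t. Gf C m R t) has_real_derivative Gg) (at gamma)"
    using Gf_deriv_gam[OF C m Rpos gnn] unfolding Gg_def S_def H_def .
  have dGR: "((\<lambda>r. Gf C m r gamma) has_real_derivative GR) (at R)"
    using Gf_deriv_R[OF C m Rpos gnn] unfolding GR_def S_def H_def .
  have nzG: "R + gamma * (Gf C m R gamma)\<^sup>2 \<noteq> 0" using Dp unfolding D_def H_def by simp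
  have HGR: "Gf C m R gamma = H" by (simp add: H_def)
  have hs: "\<And>k. hstar n c gamma R k = f_fun (c k) gamma R H"
    unfolding hstar_def gfun H_def ..
  have RcH: "\<And>k. 1 \<le> k \<Longrightarrow> k \<le> n \<Longrightarrow> R - c k * H > 0"
  proof -
    fix k assume k: "1 \<le> k" "k \<le> n"
    have "0 < H * (R - c k * H) / D" using active_here k hs unfolding f_fun_def D_def by auto
    then have "0 < H * (R - c k * H)" using Dp by (simp add: zero_less_divide_iff)
    then show "R - c k * H > 0" using HF(1) by (simp add: zero_less_mult_iff)
  qed
  have cdiff: "\<And>k. 1 \<le> k \<Longrightarrow> k < n \<Longrightarrow> c k \<le> c (Suc k)" using cmono n_range by simp
  have cmp: "\<And>A B a b. B \<ge> 0 \<Longrightarrow> a \<le> b \<Longrightarrow> (A + a * B) / D\<^sup>2 \<le> (A + b * B) / D\<^sup>2"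
    by (intro divide_right_mono add_left_mono mult_right_mono) auto
  define ci where "ci = c i"
  have cip: "ci > 0" using ck i_active by (simp add: ci_def)
  have RciH: "R - ci * H > 0" using RcH i_active by (simp add: ci_def)
  have derivs:
    "deriv (\<lambda>t. f_fun ci t R H) gamma = fg ci gamma R H"
    "deriv (\<lambda>x. f_fun ci gamma R x) H = fx ci gamma R H"
    "deriv (\<lambda>t. g_fun n c t R) gamma = Gg"
    "deriv (\<lambda>r. f_fun ci gamma r H) R = fR ci gamma R H"
    "deriv (\<lambda>r. g_fun n c gamma r) R = GR"
    using DERIV_imp_deriv[OF f_d_gam[of R gamma H ci]] DERIV_imp_deriv[OF f_d_x[of R gamma H ci]]
      DERIV_imp_deriv[OF f_d_R[of R gamma H ci]] DERIV_imp_deriv[OF dGg] DERIV_imp_deriv[OF dGR]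
      Dp unfolding gfun D_def by auto
  have hi: "hstar n c gamma R i / g_fun n c gamma R = (R - ci * H) / D"
    unfolding hs gfun HGR f_fun_def D_def ci_def using HF(1) by simp
  have fxneg: "fx ci gamma R H < 0 \<longleftrightarrow> (R - ci * H) / D < 1/2"
  proof -
    have "fx ci gamma R H < 0 \<longleftrightarrow> R - gamma * H\<^sup>2 - 2 * ci * H < 0"
      unfolding fx_def using Rpos Dp unfolding D_def
      by (simp add: divide_less_0_iff mult_less_0_iff)
    also have "\<dots> \<longleftrightarrow> (R - ci * H) / D < 1/2" using Dp unfolding D_def
      by (simp add: field_simps)
    finally show ?thesis .
  qed
  have Ggneg: "Gg < 0" unfolding Gg_def using Sp HF(1) by simp
  have GRpos: "GR > 0" unfolding GR_def using Sp m by simp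
  have P1: "((\<lambda>t. hstar n c t R i) has_real_derivative (fg ci gamma R H + fx ci gamma R H * Gg)) (at gamma)"
    using chain_gam[OF dGg nzG, of ci] unfolding hstar_def gfun HGR ci_def .
  have P2: "fg ci gamma R H < 0"
  proof -
    have "H^3 * (R - ci * H) > 0" using HF(1) RciH by simp
    then show ?thesis unfolding fg_def using Dp unfolding D_def by simp
  qed
  have P3: "fx ci gamma R H * Gg > 0 \<longleftrightarrow> (R - ci * H) / D < 1/2"
    using fxneg Ggneg by (simp add: zero_less_mult_iff)
  have P4: "((\<lambda>r. hstar n c gamma r i) has_real_derivative (fR ci gamma R H + fx ci gamma R H * GR)) (at R)"
    using chain_R[OF dGR nzG, of ci] unfolding hstar_def gfun HGR ci_def .
  have P6: "fR ci gamma R H > 0" unfolding fR_def using Dp HF(1) cip gnn unfolding D_def[symmetric]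
    by (simp add: add_nonneg_pos)
  have P7: "fx ci gamma R H * GR < 0 \<longleftrightarrow> (R - ci * H) / D < 1/2"
    using fxneg GRpos by (simp add: mult_less_0_iff)
  have P5: "fR ci gamma R H + fx ci gamma R H * GR > 0"
  proof -
    have e1: "fR ci gamma R H + fx ci gamma R H * GR =
      (H\<^sup>2 * (gamma * H + ci) * S + (m * R) * (R - gamma * H\<^sup>2 - 2 * ci * H)) / (D\<^sup>2 * S)"
      unfolding fR_def fx_def GR_def D_def[symmetric] using Sp Dp by (simp add: field_simps)
    have e2: "H\<^sup>2 * (gamma * H + ci) * S + (m * R) * (R - gamma * H\<^sup>2 - 2 * ci * H)
       = gamma * H^3 * (gamma * H + ci) + H * (gamma * H + C) * (R - ci * H)"
      unfolding HF(2)[symmetric] S_def by (simp add: algebra_simps power2_eq_square power3_eq_cube)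
    have "gamma * H^3 * (gamma * H + ci) \<ge> 0" using gnn HF(1) cip by simp
    moreover have "H * (gamma * H + C) * (R - ci * H) > 0" using gnn HF(1) C RciH
      by (simp add: add_nonneg_pos)
    ultimately have "gamma * H^3 * (gamma * H + ci) + H * (gamma * H + C) * (R - ci * H) > 0" by linarith
    then show ?thesis unfolding e1 e2 using Dp Sp by simp
  qed
  have P8: "\<forall>k. 1 \<le> k \<and> k < n \<longrightarrow>
              deriv (\<lambda>t. hstar n c t R k / g_fun n c t R) gamma
                \<le> deriv (\<lambda>t. hstar n c t R (Suc k) / g_fun n c t R) gamma"
  proof (intro allI impI)
    fix k assume k: "1 \<le> k \<and> k < n"
    define B where "B = - Gg * D + H^3 + 2 * gamma * H\<^sup>2 * Gg"
    define A where "A = -(R * (H\<^sup>2 + 2 * gamma * H * Gg))"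
    have dq: "\<And>cc. deriv (\<lambda>t. f_fun cc t R (Gf C m R t) / Gf C m R t) gamma = (A + cc * B) / D\<^sup>2"
      using ratio_gam[OF dGg nzG] HF(1) unfolding HGR A_def B_def D_def
      by (intro DERIV_imp_deriv) (simp add: algebra_simps)
    have GgS: "Gg * S = -(H\<^sup>2)" unfolding Gg_def using Sp by simp
    have "B * S = -(Gg * S) * D + H^3 * S + 2 * gamma * H\<^sup>2 * (Gg * S)"
      unfolding B_def by (simp add: algebra_simps)
    also have "\<dots> = H\<^sup>2 * (gamma * H\<^sup>2 + C * H + R)"
      unfolding GgS unfolding D_def S_def by (simp add: algebra_simps power2_eq_square power3_eq_cube)
    finally have BS: "B * S = H\<^sup>2 * (gamma * H\<^sup>2 + C * H + R)" .
    have B: "B \<ge> 0"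
    proof -
      have "B * S \<ge> 0" unfolding BS using gnn HF(1) C Rpos by simp
      then show ?thesis using Sp by (simp add: zero_le_mult_iff)
    qed
    have fe: "\<And>j. (\<lambda>t. hstar n c t R j / g_fun n c t R) = (\<lambda>t. f_fun (c j) t R (Gf C m R t) / Gf C m R t)"
      unfolding hstar_def gfun ..
    show "deriv (\<lambda>t. hstar n c t R k / g_fun n c t R) gamma
                \<le> deriv (\<lambda>t. hstar n c t R (Suc k) / g_fun n c t R) gamma"
      unfolding fe dq using cmp[OF B cdiff] k by simp
  qed
  have P9: "\<forall>k. 1 \<le> k \<and> k < n \<longrightarrow>
              deriv (\<lambda>r. hstar n c gamma r k / g_fun n c gamma r) R
                \<le> deriv (\<lambda>r. hstar n c gamma r (Suc k) / g_fun n c gamma r) R"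
  proof (intro allI impI)
    fix k assume k: "1 \<le> k \<and> k < n"
    define B where "B = - GR * D + H + 2 * gamma * H\<^sup>2 * GR"
    define A where "A = D - R * (1 + 2 * gamma * H * GR)"
    have dq: "\<And>cc. deriv (\<lambda>r. f_fun cc gamma r (Gf C m r gamma) / Gf C m r gamma) R = (A + cc * B) / D\<^sup>2"
      using ratio_R[OF dGR nzG] HF(1) unfolding HGR A_def B_def D_def
      by (intro DERIV_imp_deriv) (simp add: algebra_simps)
    have BS: "B * S * R = H * S * R + (m * R) * (gamma * H\<^sup>2 - R)"
      unfolding B_def GR_def D_def using Sp
      by (simp add: field_simps power2_eq_square power3_eq_cube)
    also have "\<dots> = gamma * H\<^sup>2 * (R + gamma * H\<^sup>2 + C * H)"
      unfolding HF(2)[symmetric] S_def by (simp add: algebra_simps power2_eq_square)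
    finally have BS2: "B * (S * R) = gamma * H\<^sup>2 * (R + gamma * H\<^sup>2 + C * H)" by (simp add: mult.assoc)
    have B: "B \<ge> 0"
    proof -
      have "B * (S * R) \<ge> 0" unfolding BS2 using gnn HF(1) C Rpos by simp
      moreover have "S * R > 0" using Sp Rpos by simp
      ultimately show ?thesis by (simp add: zero_le_mult_iff)
    qed
    have fe: "\<And>j. (\<lambda>r. hstar n c gamma r j / g_fun n c gamma r) = (\<lambda>r. f_fun (c j) gamma r (Gf C m r gamma) / Gf C m r gamma)"
      unfolding hstar_def gfun ..
    show "deriv (\<lambda>r. hstar n c gamma r k / g_fun n c gamma r) R
                \<le> deriv (\<lambda>r. hstar n c gamma r (Suc k) / g_fun n c gamma r) R"
      unfolding fe dq using cmp[OF B cdiff] k by simp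
  qed
  have hH: "hstar n c gamma R i / g_fun n c gamma R < 1/2 \<longleftrightarrow> (R - ci * H) / D < 1/2"
    using hi by simp
  have gH: "g_fun n c gamma R = H" unfolding gfun H_def ..
  have dx': "deriv (f_fun ci gamma R) H = fx ci gamma R H" using derivs(2) by simp
  show ?thesis unfolding Let_def ci_def[symmetric] hH unfolding gH derivs dx'
    by (intro conjI P1 P2 P3 P4 P5 P6 P7 P8 P9)
qed

end
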